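(* Let $\alpha\in(0,1)$. Consider the repeated game with action sets $\mathcal{A}$, $\mathcal{B}$ and vector payoff $m_{\mathrm{reg}}:\mathcal{A}\times\mathcal{B}\to\mathbb{R}\times\mathbb{R}^{\mathcal{A}}$, $$m_{\mathrm{reg}}(a,b)=\Big(\mathbf{1}_{b\le a},\ \big(\ell_\alpha(a,b)-\ell_\alpha(a',b)\big)_{a'\in\mathcal{A}}\Big),\qquad \ell_\alpha(a,b)=(\alpha-\mathbf{1}_{b\le a})(b-a).$$ Then the closed convex set $S_{\mathrm{reg}}=[0,\alpha]\times(-\infty,0]^{\mathcal{A}}$ is not approachable: there is no strategy of the learner guaranteeing, for every strategy of the opponent, $d\big(\frac1T\sum_{t=1}^T m_{\mathrm{reg}}(a_t,b_t),S_{\mathrm{reg}}\big)\to0$ almost surely.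
   Context: Fix $n\ge1$; $\mathcal{A}=\{k/(n+1):k=0,\dots,n+1\}$ (so $|\mathcal{A}|=n+2$), $\mathcal{B}=\{k/(n+1):k=1,\dots,n+1\}$. Repeated game: at each round $t$ the learner chooses a mixed action on $\mathcal{A}$ and the opponent a mixed action on $\mathcal{B}$, both as functions of the past, and $a_t$, $b_t$ are drawn independently from them given the past. $d$ denotes Euclidean point-to-set distance. *)

theory Defs
  imports "HOL-Probability.Probability"
begin

definition actA :: "nat \<Rightarrow> real set" where
  "actA n = {real k / real (n + 1) | k. k \<le> n + 1}"

definition actB :: "nat \<Rightarrow> real set" where
  "actB n = {real k / real (n + 1) | k. 1 \<le> k \<and> k \<le> n + 1}"

definition pinball :: "real \<Rightarrow> real \<Rightarrow> real \<Rightarrow> real" where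
  "pinball \<alpha> a b = (\<alpha> - (if b \<le> a then 1 else 0)) * (b - a)"

text \<open>Vectors of R x R^A are represented as functions on the index set
  insert None (Some ` A): coordinate None is the first (real) component,
  coordinate Some a' is the component indexed by a' in A.\<close>
definition coords :: "nat \<Rightarrow> real option set" where
  "coords n = insert None (Some ` actA n)"

definition m_reg :: "real \<Rightarrow> real \<Rightarrow> real \<Rightarrow> real option \<Rightarrow> real" where
  "m_reg \<alpha> a b i = (case i of
      None \<Rightarrow> (if b \<le> a then 1 else 0)
    | Some a' \<Rightarrow> pinball \<alpha> a b - pinball \<alpha> a' b)"

definition S_reg :: "nat \<Rightarrow> real \<Rightarrow> (real option \<Rightarrow> real) set" where
  "S_reg n \<alpha> = {v. 0 \<le> v None \<and> v None \<le> \<alpha> \<and> (\<forall>a'\<in>actA n. v (Some a') \<le> 0)}"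

definition eucl_setdist :: "'i set \<Rightarrow> ('i \<Rightarrow> real) \<Rightarrow> ('i \<Rightarrow> real) set \<Rightarrow> real" where
  "eucl_setdist I v S = Inf {sqrt (\<Sum>i\<in>I. (v i - s i)^2) | s. s \<in> S}"

definition hist :: "(nat \<Rightarrow> 'w \<Rightarrow> real) \<Rightarrow> (nat \<Rightarrow> 'w \<Rightarrow> real) \<Rightarrow> nat \<Rightarrow> 'w \<Rightarrow> (real \<times> real) list" where
  "hist a b t \<omega> = map (\<lambda>i. (a i \<omega>, b i \<omega>)) [0..<t]"

definition strategy_on :: "real set \<Rightarrow> ((real \<times> real) list \<Rightarrow> real pmf) \<Rightarrow> bool" where
  "strategy_on X \<sigma> \<longleftrightarrow> (\<forall>h. set_pmf (\<sigma> h) \<subseteq> X)"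

text \<open>The random processes a, b on probability space M realize the play of
  learner strategy sigma against opponent strategy tau: given the past, a_t and b_t
  are drawn independently from sigma(past) and tau(past).\<close>
definition play_realization ::
  "'w measure \<Rightarrow> ((real \<times> real) list \<Rightarrow> real pmf) \<Rightarrow> ((real \<times> real) list \<Rightarrow> real pmf)
     \<Rightarrow> (nat \<Rightarrow> 'w \<Rightarrow> real) \<Rightarrow> (nat \<Rightarrow> 'w \<Rightarrow> real) \<Rightarrow> bool" where
  "play_realization M \<sigma> \<tau> a b \<longleftrightarrow>
     prob_space M \<and>
     (\<forall>t. a t \<in> borel_measurable M \<and> b t \<in> borel_measurable M) \<and>
     (\<forall>t h x y. measure M {\<omega>\<in>space M. hist a b t \<omega> = h \<and> a t \<omega> = x \<and> b t \<omega> = y}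
        = measure M {\<omega>\<in>space M. hist a b t \<omega> = h} * pmf (\<sigma> h) x * pmf (\<tau> h) y)"

definition avg_payoff :: "real \<Rightarrow> (nat \<Rightarrow> 'w \<Rightarrow> real) \<Rightarrow> (nat \<Rightarrow> 'w \<Rightarrow> real) \<Rightarrow> nat \<Rightarrow> 'w
    \<Rightarrow> real option \<Rightarrow> real" where
  "avg_payoff \<alpha> a b T \<omega> i = (\<Sum>t<T. m_reg \<alpha> (a t \<omega>) (b t \<omega>) i) / real T"

end

theory Submission
  imports Defs
begin

primrec paths :: "((real \<times> real) list \<Rightarrow> real pmf) \<Rightarrow> real \<Rightarrow> nat \<Rightarrow> real list pmf" where
  "paths \<sigma> c 0 = return_pmf []"
| "paths \<sigma> c (Suc k) = paths \<sigma> c k \<bind> (\<lambda>l. map_pmf (\<lambda>x. l @ [x]) (\<sigma> (map (\<lambda>x. (x,c)) l)))"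

lemma set_paths: "l \<in> set_pmf (paths \<sigma> c k) \<Longrightarrow> length l = k"
  by (induction k arbitrary: l) auto

lemma set_paths2: "strategy_on A \<sigma> \<Longrightarrow> l \<in> set_pmf (paths \<sigma> c k) \<Longrightarrow> set l \<subseteq> A"
  by (induction k arbitrary: l) (auto simp: strategy_on_def, blast+)

lemma take_paths: "k \<le> N \<Longrightarrow> map_pmf (take k) (paths \<sigma> c N) = paths \<sigma> c k"
proof (induction N)
  case 0 then show ?case by simp
next
  case (Suc N)
  show ?case
  proof (cases "k = Suc N")
    case True
    have "map_pmf (take k) (paths \<sigma> c (Suc N)) = map_pmf id (paths \<sigma> c (Suc N))"
      by (rule map_pmf_cong) (auto dest: set_paths simp: True)
    then show ?thesis by (simp add: True)
  next
    case False
    then have k: "k \<le> N" using Suc by simp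
    have "map_pmf (take k) (paths \<sigma> c (Suc N)) =
      paths \<sigma> c N \<bind> (\<lambda>l. map_pmf (\<lambda>x. take k (l @ [x])) (\<sigma> (map (\<lambda>x. (x,c)) l)))"
      by (simp add: map_bind_pmf map_pmf_comp)
    also have "\<dots> = paths \<sigma> c N \<bind> (\<lambda>l. return_pmf (take k l))"
      apply (rule bind_pmf_cong, simp)
      subgoal for l using set_paths[of l \<sigma> c N] k by (simp add: map_pmf_const)
      done
    also have "\<dots> = map_pmf (take k) (paths \<sigma> c N)"
      by (simp add: map_pmf_def)
    finally show ?thesis using Suc k by simp
  qed
qed

lemma pmf_paths_Suc:
  "pmf (paths \<sigma> c (Suc k)) (l @ [x]) = pmf (paths \<sigma> c k) l * pmf (\<sigma> (map (\<lambda>x. (x,c)) l)) x"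
proof -
  have "pmf (paths \<sigma> c (Suc k)) (l @ [x]) =
     (\<integral>l'. pmf (map_pmf (\<lambda>x. l' @ [x]) (\<sigma> (map (\<lambda>x. (x,c)) l'))) (l @ [x]) \<partial>measure_pmf (paths \<sigma> c k))"
    by (simp add: pmf_bind)
  also have "\<dots> = (\<integral>l'. pmf (\<sigma> (map (\<lambda>x. (x,c)) l)) x * indicator {l} l' \<partial>measure_pmf (paths \<sigma> c k))"
  proof (rule Bochner_Integration.integral_cong[OF refl])
    fix l' show "pmf (map_pmf (\<lambda>x. l' @ [x]) (\<sigma> (map (\<lambda>x. (x,c)) l'))) (l @ [x]) =
       pmf (\<sigma> (map (\<lambda>x. (x,c)) l)) x * indicator {l} l'"
    proof (cases "l' = l")
      case True
      have "inj (\<lambda>x::real. l @ [x])" by (simp add: inj_def)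
      then show ?thesis using True pmf_map_inj'[of "\<lambda>x::real. l @ [x]"] by simp
    next
      case False
      then have "l @ [x] \<notin> set_pmf (map_pmf (\<lambda>x. l' @ [x]) (\<sigma> (map (\<lambda>x. (x,c)) l')))" by auto
      then show ?thesis using False by (simp add: set_pmf_eq)
    qed
  qed
  also have "\<dots> = pmf (paths \<sigma> c k) l * pmf (\<sigma> (map (\<lambda>x. (x,c)) l)) x"
    by (simp add: measure_pmf_single)
  finally show ?thesis .
qed

definition PJ :: "((real \<times> real) list \<Rightarrow> real pmf) \<Rightarrow> real \<Rightarrow> nat set \<Rightarrow> (nat \<Rightarrow> real) measure" where
  "PJ \<sigma> c J = distr (measure_pmf (paths \<sigma> c (\<Sum>i\<in>J. Suc i))) (PiM J (\<lambda>_. borel)) (\<lambda>l. restrict (\<lambda>i. l ! i) J)"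

lemma sum_Suc_ge: "finite J \<Longrightarrow> i \<in> J \<Longrightarrow> i < (\<Sum>i\<in>J. Suc i)"
  using member_le_sum[of i J Suc] by simp

lemma sum_Suc_mono: "finite H \<Longrightarrow> J \<subseteq> H \<Longrightarrow> (\<Sum>i\<in>J. Suc i) \<le> (\<Sum>i\<in>H. Suc i)"
  by (rule sum_mono2) auto

lemma meas_restr: "(\<lambda>l. restrict (\<lambda>i. l ! i) J) \<in> measurable (measure_pmf p) (PiM J (\<lambda>_. borel))"
  by (simp add: space_PiM)

lemma PJ_take:
  assumes "finite J" "(\<Sum>i\<in>J. Suc i) \<le> N"
  shows "PJ \<sigma> c J = distr (measure_pmf (paths \<sigma> c N)) (PiM J (\<lambda>_. borel)) (\<lambda>l. restrict (\<lambda>i. l ! i) J)"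
proof -
  let ?K = "\<Sum>i\<in>J. Suc i"
  have "PJ \<sigma> c J = distr (measure_pmf (map_pmf (take ?K) (paths \<sigma> c N))) (PiM J (\<lambda>_. borel)) (\<lambda>l. restrict (\<lambda>i. l ! i) J)"
    unfolding PJ_def using assms by (simp add: take_paths)
  also have "\<dots> = distr (distr (measure_pmf (paths \<sigma> c N)) (count_space UNIV) (take ?K)) (PiM J (\<lambda>_. borel)) (\<lambda>l. restrict (\<lambda>i. l ! i) J)"
    by (simp add: map_pmf_rep_eq)
  also have "\<dots> = distr (measure_pmf (paths \<sigma> c N)) (PiM J (\<lambda>_. borel)) ((\<lambda>l. restrict (\<lambda>i. l ! i) J) o take ?K)"
    by (rule distr_distr) (auto simp: space_PiM)
  also have "((\<lambda>l. restrict (\<lambda>i. l ! i) J) o take ?K) = (\<lambda>l. restrict (\<lambda>i. l ! i) J)"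
    using sum_Suc_ge[OF assms(1)] by (auto simp: fun_eq_iff)
  finally show ?thesis .
qed

lemma proj_fam: "polish_projective UNIV (PJ \<sigma> c)"
  unfolding polish_projective_def projective_family_def
proof safe
  fix J :: "nat set" assume J: "finite J"
  show "prob_space (PJ \<sigma> c J)" unfolding PJ_def
    by (rule prob_space.prob_space_distr) (auto simp: prob_space_measure_pmf space_PiM)
next
  fix J H :: "nat set" assume JH: "J \<subseteq> H" "finite H"
  then have fJ: "finite J" by (rule finite_subset)
  have "distr (PJ \<sigma> c H) (PiM J (\<lambda>_. borel)) (\<lambda>f. restrict f J) =
     distr (measure_pmf (paths \<sigma> c (\<Sum>i\<in>H. Suc i))) (PiM J (\<lambda>_. borel)) ((\<lambda>f. restrict f J) o (\<lambda>l. restrict (\<lambda>i. l ! i) H))"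
    unfolding PJ_def
    by (rule distr_distr) (auto intro!: measurable_restrict_subset JH simp: space_PiM)
  also have "((\<lambda>f. restrict f J) o (\<lambda>l. restrict (\<lambda>i. l ! i) H)) = (\<lambda>l. restrict (\<lambda>i. l ! i) J)"
    using JH by (auto simp: fun_eq_iff)
  also have "distr (measure_pmf (paths \<sigma> c (\<Sum>i\<in>H. Suc i))) (PiM J (\<lambda>_. borel)) (\<lambda>l. restrict (\<lambda>i. l ! i) J) = PJ \<sigma> c J"
    by (rule PJ_take[symmetric]) (use fJ sum_Suc_mono[OF JH(2) JH(1)] in auto)
  finally show "PJ \<sigma> c J = distr (PJ \<sigma> c H) (PiM J (\<lambda>_. borel)) (\<lambda>f. restrict f J)" ..
qed

lemma lim_cyl:
  assumes "length l = t"
  shows "measure (projective_family.lim UNIV (PJ \<sigma> c) (\<lambda>_. borel::real measure))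
     {\<omega> \<in> space (projective_family.lim UNIV (PJ \<sigma> c) (\<lambda>_. borel::real measure)). \<forall>i<t. \<omega> i = l ! i}
     = pmf (paths \<sigma> c t) l"
proof -
  interpret polish_projective UNIV "PJ \<sigma> c" by (rule proj_fam)
  let ?X = "PiE {0..<t} (\<lambda>i. {l ! i})"
  let ?K = "\<Sum>i\<in>{0..<t}. Suc i"
  have X: "?X \<in> sets (PiM {0..<t} (\<lambda>_. borel::real measure))" by (rule sets_PiM_I_finite) auto
  have tK: "t \<le> ?K" using sum_Suc_ge[of "{0..<t}" "t - 1"] by (cases t) auto
  have set: "{\<omega> \<in> space lim. \<forall>i<t. \<omega> i = l ! i} = emb UNIV {0..<t} ?X"
    by (auto simp: prod_emb_def space_PiM PiE_iff)
  have "measure lim (emb UNIV {0..<t} ?X) = measure (PJ \<sigma> c {0..<t}) ?X"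
    by (rule measure_lim_emb) (auto simp: X)
  also have "\<dots> = measure (measure_pmf (paths \<sigma> c ?K)) ((\<lambda>l. restrict (\<lambda>i. l ! i) {0..<t}) -` ?X)"
    unfolding PJ_def by (subst measure_distr) (auto simp: space_PiM X)
  also have "\<dots> = measure (measure_pmf (paths \<sigma> c ?K)) (((\<lambda>l. restrict (\<lambda>i. l ! i) {0..<t}) -` ?X) \<inter> set_pmf (paths \<sigma> c ?K))"
    by (simp add: measure_Int_set_pmf)
  also have "((\<lambda>l. restrict (\<lambda>i. l ! i) {0..<t}) -` ?X) \<inter> set_pmf (paths \<sigma> c ?K) = take t -` {l} \<inter> set_pmf (paths \<sigma> c ?K)"
  proof -
    show ?thesis
    proof (intro equalityI subsetI)
      fix l' assume "l' \<in> ((\<lambda>l. restrict (\<lambda>i. l ! i) {0..<t}) -` ?X) \<inter> set_pmf (paths \<sigma> c ?K)"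
      then have l': "l' \<in> set_pmf (paths \<sigma> c ?K)" "restrict (\<lambda>i. l' ! i) {0..<t} \<in> ?X" by auto
      have "length l' = ?K" using l'(1) by (rule set_paths)
      then have "take t l' = l" using l'(2) tK assms
        by (intro nth_equalityI) (auto simp: PiE_iff)
      then show "l' \<in> take t -` {l} \<inter> set_pmf (paths \<sigma> c ?K)" using l' by auto
    next
      fix l' assume "l' \<in> take t -` {l} \<inter> set_pmf (paths \<sigma> c ?K)"
      then have l': "l' \<in> set_pmf (paths \<sigma> c ?K)" "take t l' = l" by auto
      have "length l' = ?K" using l'(1) by (rule set_paths)
      then have "restrict (\<lambda>i. l' ! i) {0..<t} \<in> ?X" using l'(2) tK assms
        by (auto simp: PiE_iff)
      then show "l' \<in> ((\<lambda>l. restrict (\<lambda>i. l ! i) {0..<t}) -` ?X) \<inter> set_pmf (paths \<sigma> c ?K)" using l' by auto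
    qed
  qed
  also have "measure (measure_pmf (paths \<sigma> c ?K)) (take t -` {l} \<inter> set_pmf (paths \<sigma> c ?K))
     = measure (measure_pmf (map_pmf (take t) (paths \<sigma> c ?K))) {l}"
    by (simp add: measure_Int_set_pmf)
  also have "\<dots> = pmf (paths \<sigma> c t) l"
    by (subst take_paths[OF tK]) (simp add: measure_pmf_single)
  finally show ?thesis using set by simp
qed

lemma lim_AE:
  assumes "strategy_on A \<sigma>" "finite A"
  shows "AE \<omega> in projective_family.lim UNIV (PJ \<sigma> c) (\<lambda>_. borel::real measure). \<forall>t. \<omega> t \<in> A"
proof -
  interpret polish_projective UNIV "PJ \<sigma> c" by (rule proj_fam)
  have "AE \<omega> in lim. \<omega> t \<in> A" for t
  proof -
    let ?X = "PiE {t} (\<lambda>_. - A)"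
    have X: "?X \<in> sets (PiM {t} (\<lambda>_. borel::real measure))"
      by (rule sets_PiM_I_finite) (auto intro!: borel_comp simp: assms(2) finite_imp_closed)
    have "measure lim (emb UNIV {t} ?X) = measure (PJ \<sigma> c {t}) ?X"
      by (rule measure_lim_emb) (auto simp: X)
    also have "\<dots> = measure (measure_pmf (paths \<sigma> c (Suc t))) ((\<lambda>l. restrict (\<lambda>i. l ! i) {t}) -` ?X)"
      unfolding PJ_def by (subst measure_distr) (auto simp: space_PiM X)
    also have "\<dots> = measure (measure_pmf (paths \<sigma> c (Suc t))) (((\<lambda>l. restrict (\<lambda>i. l ! i) {t}) -` ?X) \<inter> set_pmf (paths \<sigma> c (Suc t)))"
      by (rule measure_Int_set_pmf[symmetric])
    also have "((\<lambda>l. restrict (\<lambda>i. l ! i) {t}) -` ?X) \<inter> set_pmf (paths \<sigma> c (Suc t)) = {}"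
    proof (intro equalityI subsetI)
      fix l' assume "l' \<in> ((\<lambda>l. restrict (\<lambda>i. l ! i) {t}) -` ?X) \<inter> set_pmf (paths \<sigma> c (Suc t))"
      then have l': "l' \<in> set_pmf (paths \<sigma> c (Suc t))" "l' ! t \<notin> A" by (auto simp: PiE_iff)
      have "length l' = Suc t" using l'(1) by (rule set_paths)
      then have "l' ! t \<in> set l'" by simp
      then show "l' \<in> {}" using set_paths2[OF assms(1) l'(1)] l'(2) by auto
    qed simp
    finally have m0: "measure lim (emb UNIV {t} ?X) = 0" by simp
    have sets: "emb UNIV {t} ?X \<in> sets lim"
      using X by (simp add: measurable_prod_emb)
    show ?thesis
    proof (rule AE_I[OF _ _ sets])
      show "{x \<in> space lim. x t \<notin> A} \<subseteq> emb UNIV {t} ?X"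
        by (auto simp: prod_emb_def space_PiM PiE_iff)
      show "emeasure lim (emb UNIV {t} ?X) = 0"
        using m0 sets by (simp add: P.emeasure_eq_measure)
    qed
  qed
  then show ?thesis by (simp add: AE_all_countable)
qed

lemma hist_const: "hist (\<lambda>t \<omega>. \<omega> t) (\<lambda>t \<omega>. c) t \<omega> = map (\<lambda>x. (x,c)) (map \<omega> [0..<t])"
  by (simp add: hist_def)

lemma map_pair_eq: "map (\<lambda>x. (x,c)) xs = map (\<lambda>x. (x,c)) ys \<longleftrightarrow> xs = ys"
  by (rule inj_map_eq_map) (simp add: inj_def)

lemma map_upt_eq: "length l = t \<Longrightarrow> map \<omega> [0..<t] = l \<longleftrightarrow> (\<forall>i<t. \<omega> i = l ! i)"
  by (auto simp: list_eq_iff_nth_eq)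

lemma realization:
  "play_realization (projective_family.lim UNIV (PJ \<sigma> c) (\<lambda>_. borel::real measure)) \<sigma> (\<lambda>_. return_pmf c)
     (\<lambda>t \<omega>. \<omega> t) (\<lambda>t \<omega>. c)"
proof -
  interpret polish_projective UNIV "PJ \<sigma> c" by (rule proj_fam)
  have meas: "(\<lambda>\<omega>. \<omega> t) \<in> borel_measurable lim" for t
    by (simp add: measurable_cong_sets[OF sets_lim refl])
  have eq: "measure lim {\<omega> \<in> space lim. hist (\<lambda>t \<omega>. \<omega> t) (\<lambda>t \<omega>. c) t \<omega> = h \<and> \<omega> t = x \<and> c = y}
     = measure lim {\<omega> \<in> space lim. hist (\<lambda>t \<omega>. \<omega> t) (\<lambda>t \<omega>. c) t \<omega> = h} * pmf (\<sigma> h) x * pmf (return_pmf c) y"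
    for t h x y
  proof (cases "\<exists>l. h = map (\<lambda>x. (x,c)) l \<and> length l = t")
    case True
    then obtain l where l: "h = map (\<lambda>x. (x,c)) l" "length l = t" by blast
    have s1: "{\<omega> \<in> space lim. hist (\<lambda>t \<omega>. \<omega> t) (\<lambda>t \<omega>. c) t \<omega> = h} = {\<omega> \<in> space lim. \<forall>i<t. \<omega> i = l ! i}"
      using l by (simp add: hist_const map_pair_eq map_upt_eq)
    show ?thesis
    proof (cases "y = c")
      case True
      have s2: "{\<omega> \<in> space lim. hist (\<lambda>t \<omega>. \<omega> t) (\<lambda>t \<omega>. c) t \<omega> = h \<and> \<omega> t = x \<and> c = y}
         = {\<omega> \<in> space lim. \<forall>i<Suc t. \<omega> i = (l @ [x]) ! i}"
        using l True by (auto simp: hist_const map_pair_eq map_upt_eq nth_append less_Suc_eq)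
      show ?thesis unfolding s1 s2 using l True lim_cyl[of "l@[x]" "Suc t" \<sigma> c] lim_cyl[of l t \<sigma> c]
          pmf_paths_Suc[of \<sigma> c t l x]
        by (simp del: paths.simps)
    next
      case False
      then show ?thesis by simp
    qed
  next
    case False
    then have e1: "{\<omega> \<in> space lim. hist (\<lambda>t \<omega>. \<omega> t) (\<lambda>t \<omega>. c) t \<omega> = h} = {}"
      by (auto simp: hist_const simp del: map_map)
    have e2: "{\<omega> \<in> space lim. hist (\<lambda>t \<omega>. \<omega> t) (\<lambda>t \<omega>. c) t \<omega> = h \<and> \<omega> t = x \<and> c = y} = {}"
      using False by (auto simp: hist_const simp del: map_map)
    show ?thesis unfolding e1 e2 by simp
  qed
  show ?thesis unfolding play_realization_def
    using P.prob_space_axioms meas eq by simp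
qed

lemma actA_finite: "finite (actA n)"
proof -
  have "actA n = (\<lambda>k. real k / real (n + 1)) ` {..n+1}" by (auto simp: actA_def)
  then show ?thesis by simp
qed

lemma c_actA: "1 / real (n + 1) \<in> actA n"
  unfolding actA_def by (rule CollectI, rule exI[of _ 1]) auto

lemma c_actB: "1 / real (n + 1) \<in> actB n"
  unfolding actB_def by (rule CollectI, rule exI[of _ 1]) auto

lemma actA_cases: "a \<in> actA n \<Longrightarrow> a = 0 \<or> 1 / real (n + 1) \<le> a"
proof -
  assume "a \<in> actA n"
  then obtain k where k: "a = real k / real (n+1)" by (auto simp: actA_def)
  show ?thesis
  proof (cases "k = 0")
    case True then show ?thesis using k by simp
  next
    case False then have "1 \<le> real k" by simp
    then show ?thesis using k by (simp add: divide_right_mono)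
  qed
qed

lemma term_bound:
  assumes "a \<in> actA n" "0 < \<alpha>" "\<alpha> < 1"
  shows "pinball \<alpha> a (1 / real (n + 1)) - pinball \<alpha> (1 / real (n + 1)) (1 / real (n + 1))
     \<ge> (1 - (if 1 / real (n + 1) \<le> a then 1 else 0)) * (\<alpha> * (1 / real (n + 1)))"
  using actA_cases[OF assms(1)]
proof
  assume "a = 0" then show ?thesis by (simp add: pinball_def)
next
  assume h: "1 / real (n + 1) \<le> a"
  have "0 \<le> (\<alpha> - 1) * (1 / real (n + 1) - a)"
    using h assms by (intro mult_nonpos_nonpos) auto
  then show ?thesis using h by (simp add: pinball_def)
qed

lemma coord_le_norm: "finite I \<Longrightarrow> j \<in> I \<Longrightarrow> \<bar>f j\<bar> \<le> sqrt (\<Sum>i\<in>I. (f i)^2)"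
proof -
  assume "finite I" "j \<in> I"
  then have "(f j)^2 \<le> (\<Sum>i\<in>I. (f i)^2)" by (intro member_le_sum) auto
  then have "sqrt ((f j)^2) \<le> sqrt (\<Sum>i\<in>I. (f i)^2)" by (rule real_sqrt_le_mono)
  then show ?thesis by simp
qed

lemma arith_bound:
  fixes p q \<alpha> k :: real
  assumes "0 < k" "k \<le> 1" "\<alpha> < 1" "q \<ge> (1 - p) * k"
  shows "max (p - \<alpha>) q \<ge> (1 - \<alpha>) * k / 2"
proof (cases "p - \<alpha> \<ge> (1 - \<alpha>) * k / 2")
  case True then show ?thesis using max.cobounded1[of "p - \<alpha>" q] by linarith
next
  case False
  then have "1 - p \<ge> 1 - \<alpha> - (1 - \<alpha>) * k / 2" by simp
  moreover have "(1 - \<alpha>) * k / 2 \<le> (1 - \<alpha>) / 2" using assms by (simp add: mult_left_le)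
  ultimately have "1 - p \<ge> (1 - \<alpha>) / 2" by simp
  then have "(1 - p) * k \<ge> (1 - \<alpha>) / 2 * k" using assms by (intro mult_right_mono) auto
  moreover have "(1 - \<alpha>) / 2 * k = (1 - \<alpha>) * k / 2" by simp
  ultimately show ?thesis using assms(4) max.cobounded2[of q "p - \<alpha>"] by linarith
qed

lemma dist_bound:
  assumes "0 < \<alpha>" "\<alpha> < 1" "\<forall>t. \<omega> t \<in> actA n" "T \<ge> 1"
  shows "eucl_setdist (coords n) (avg_payoff \<alpha> (\<lambda>t \<omega>. \<omega> t) (\<lambda>t \<omega>. 1 / real (n + 1)) T \<omega>) (S_reg n \<alpha>)
     \<ge> (1 - \<alpha>) * (\<alpha> * (1 / real (n + 1))) / 2"
proof -
  define c where "c = 1 / real (n + 1)"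
  define k where "k = \<alpha> * c"
  define v where "v = avg_payoff \<alpha> (\<lambda>t \<omega>. \<omega> t) (\<lambda>t \<omega>. c) T \<omega>"
  define p where "p = v None"
  have k: "0 < k" "k \<le> 1"
    using assms by (auto simp: k_def c_def intro!: mult_le_one)
  have Tpos: "real T > 0" using assms by simp
  have vS: "v (Some c) \<ge> (1 - p) * k"
  proof -
    define Sp where "Sp = (\<Sum>t<T. pinball \<alpha> (\<omega> t) c - pinball \<alpha> c c)"
    define Si where "Si = (\<Sum>t<T. if c \<le> \<omega> t then 1 else (0::real))"
    have v1: "v (Some c) = Sp / real T"
      by (simp add: v_def avg_payoff_def m_reg_def Sp_def)
    have "Sp \<ge> (\<Sum>t<T. (1 - (if c \<le> \<omega> t then 1 else 0)) * k)"
      unfolding Sp_def by (rule sum_mono) (use term_bound assms in \<open>simp add: c_def k_def\<close>)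
    moreover have "(\<Sum>t<T. (1 - (if c \<le> \<omega> t then 1 else (0::real))) * k) = (real T - Si) * k"
      by (simp add: sum_subtractf sum_distrib_right[symmetric] Si_def)
    ultimately have "Sp \<ge> (real T - Si) * k" by simp
    then have "Sp / real T \<ge> (real T - Si) * k / real T" using Tpos by (simp add: divide_right_mono)
    moreover have p1: "p = Si / real T"
      by (simp add: p_def v_def avg_payoff_def m_reg_def Si_def)
    moreover have "(real T - Si) * k / real T = (1 - Si / real T) * k" using Tpos by (simp add: field_simps)
    ultimately show ?thesis using v1 by simp
  qed
  have fin: "finite (coords n)" by (simp add: coords_def actA_finite)
  have "(1 - \<alpha>) * k / 2 \<le> Inf {sqrt (\<Sum>i\<in>coords n. (v i - s i)^2) | s. s \<in> S_reg n \<alpha>}"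
  proof (rule cInf_greatest)
    show "{sqrt (\<Sum>i\<in>coords n. (v i - s i)^2) | s. s \<in> S_reg n \<alpha>} \<noteq> {}"
      using assms by (auto simp: S_reg_def intro!: exI[of _ "\<lambda>_. 0"])
  next
    fix d assume "d \<in> {sqrt (\<Sum>i\<in>coords n. (v i - s i)^2) | s. s \<in> S_reg n \<alpha>}"
    then obtain s where s: "s \<in> S_reg n \<alpha>" and d: "d = sqrt (\<Sum>i\<in>coords n. (v i - s i)^2)" by blast
    have d1: "\<bar>v None - s None\<bar> \<le> d" unfolding d
      using coord_le_norm[OF fin, of None "\<lambda>i. v i - s i"] by (simp add: coords_def)
    have d2: "\<bar>v (Some c) - s (Some c)\<bar> \<le> d" unfolding d
      using coord_le_norm[OF fin, of "Some c" "\<lambda>i. v i - s i"] c_actA by (simp add: coords_def c_def)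
    have "s None \<le> \<alpha>" "s (Some c) \<le> 0" using s c_actA by (auto simp: S_reg_def c_def)
    then have "max (p - \<alpha>) (v (Some c)) \<le> d" using d1 d2 by (auto simp: p_def)
    moreover have "max (p - \<alpha>) (v (Some c)) \<ge> (1 - \<alpha>) * k / 2"
      by (rule arith_bound) (use k assms vS in auto)
    ultimately show "(1 - \<alpha>) * k / 2 \<le> d" by (meson order_trans)
  qed
  then show ?thesis by (simp add: eucl_setdist_def v_def k_def c_def)
qed

theorem theorem4:
  fixes n :: nat and \<alpha> :: real
  assumes "n \<ge> 1" and "0 < \<alpha>" and "\<alpha> < 1"
  shows "\<not> (\<exists>\<sigma>. strategy_on (actA n) \<sigma> \<and>
            (\<forall>\<tau>. strategy_on (actB n) \<tau> \<longrightarrow>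
              (\<forall>(M :: (nat \<Rightarrow> real) measure) a b. play_realization M \<sigma> \<tau> a b \<longrightarrow>
                 (AE \<omega> in M. (\<lambda>T. eucl_setdist (coords n) (avg_payoff \<alpha> a b T \<omega>) (S_reg n \<alpha>))
                                 \<longlonglongrightarrow> 0))))"
proof
  assume "\<exists>\<sigma>. strategy_on (actA n) \<sigma> \<and>
            (\<forall>\<tau>. strategy_on (actB n) \<tau> \<longrightarrow>
              (\<forall>(M :: (nat \<Rightarrow> real) measure) a b. play_realization M \<sigma> \<tau> a b \<longrightarrow>
                 (AE \<omega> in M. (\<lambda>T. eucl_setdist (coords n) (avg_payoff \<alpha> a b T \<omega>) (S_reg n \<alpha>))
                                 \<longlonglongrightarrow> 0)))"
  then obtain \<sigma> where \<sigma>: "strategy_on (actA n) \<sigma>" and H: "\<forall>\<tau>. strategy_on (actB n) \<tau> \<longrightarrow>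
              (\<forall>(M :: (nat \<Rightarrow> real) measure) a b. play_realization M \<sigma> \<tau> a b \<longrightarrow>
                 (AE \<omega> in M. (\<lambda>T. eucl_setdist (coords n) (avg_payoff \<alpha> a b T \<omega>) (S_reg n \<alpha>))
                                 \<longlonglongrightarrow> 0))" by blast
  define c where "c = 1 / real (n + 1)"
  interpret polish_projective UNIV "PJ \<sigma> c" by (rule proj_fam)
  have \<tau>: "strategy_on (actB n) (\<lambda>_. return_pmf c)"
    using c_actB[of n] by (simp add: strategy_on_def c_def)
  have AE1: "AE \<omega> in lim. (\<lambda>T. eucl_setdist (coords n) (avg_payoff \<alpha> (\<lambda>t \<omega>. \<omega> t) (\<lambda>t \<omega>. c) T \<omega>) (S_reg n \<alpha>))
                                 \<longlonglongrightarrow> 0"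
    using H \<tau> realization[of \<sigma> c] by blast
  have AE2: "AE \<omega> in lim. \<forall>t. \<omega> t \<in> actA n"
    by (rule lim_AE[OF \<sigma> actA_finite])
  define \<delta> where "\<delta> = (1 - \<alpha>) * (\<alpha> * (1 / real (n + 1))) / 2"
  have \<delta>: "\<delta> > 0" using assms by (simp add: \<delta>_def)
  have "AE \<omega> in lim. False"
    using AE1 AE2
  proof eventually_elim
    case (elim \<omega>)
    have "eventually (\<lambda>T. eucl_setdist (coords n) (avg_payoff \<alpha> (\<lambda>t \<omega>. \<omega> t) (\<lambda>t \<omega>. c) T \<omega>) (S_reg n \<alpha>) < \<delta>) sequentially"
      using order_tendstoD(2)[OF elim(1) \<delta>] .
    moreover have "eventually (\<lambda>T. T \<ge> (1::nat)) sequentially" by (rule eventually_ge_at_top)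
    ultimately have "eventually (\<lambda>T. False) sequentially"
    proof eventually_elim
      case (elim T)
      then show False using dist_bound[OF assms(2,3) \<open>\<forall>t. \<omega> t \<in> actA n\<close>, of T] by (simp add: c_def \<delta>_def)
    qed
    then show False by simp
  qed
  then show False using P.AE_False by simp
qed

end
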